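(* Let $n>1$, $a\in\mathcal{T}_n$, and consider the semigroup $(\mathcal{T}_n,*_a)$. Let $x\in\mathcal{T}_n$. If $\operatorname{rank}(x)\le\operatorname{rank}(a)$, $|\operatorname{ran}(x)\cap M|\le1$ for every block $M$ of $\rho_a$, and $B\cap\operatorname{ran}(a)\ne\varnothing$ for every block $B$ of $\rho_x$, then $$H_x=\{y\in\mathcal{T}_n : \rho_y=\rho_x,\ \operatorname{ran}(y)=\operatorname{ran}(x),\ |\operatorname{ran}(y)\cap M|\le1 \ \forall \text{ blocks } M \text{ of } \rho_a,\ B\cap\operatorname{ran}(a)\ne\varnothing\ \forall \text{ blocks } B \text{ of } \rho_y\}.$$ Otherwise $H_x=\{x\}$.
   Context: $\mathcal{T}_n$ is the set of all maps $N\to N$, $N=\{1,\dots,n\}$. Maps are composed from left to right: $(xy)(i)=y(x(i))$. For fixed $a\in\mathcal{T}_n$, $x*_a y:=xay$; $(\mathcal{T}_n,*_a)$ is a semigroup. $\operatorname{ran}(x)$ is the image of $x$, $\operatorname{rank}(x)=|\operatorname{ran}(x)|$, and $\rho_x$ is the partition of $N$ into the nonempty fibres of $x$ ($i,j$ in the same block iff $x(i)=x(j)$). Green's relations in a semigroup $S$: with $S^1$ the semigroup $S$ with an identity adjoined, $x\mathcal{L}y$ iff $S^1x=S^1y$, $x\mathcal{R}y$ iff $xS^1=yS^1$, $\mathcal{H}=\mathcal{L}\cap\mathcal{R}$; $H_x$ denotes the $\mathcal{H}$-class of $x$ in $(\mathcal{T}_n,*_a)$. *)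

theory Defs
  imports Main
begin

definition Tn :: "nat \<Rightarrow> (nat \<Rightarrow> nat) set" where
  "Tn n = {f. (\<forall>i\<in>{1..n}. f i \<in> {1..n}) \<and> (\<forall>i. i \<notin> {1..n} \<longrightarrow> f i = 0)}"

text \<open>Left-to-right composition: (x y)(i) = y (x i); the sandwich product x *_a y = x a y.\<close>
definition sandwich :: "(nat \<Rightarrow> nat) \<Rightarrow> (nat \<Rightarrow> nat) \<Rightarrow> (nat \<Rightarrow> nat) \<Rightarrow> (nat \<Rightarrow> nat)" where
  "sandwich a x y = y \<circ> a \<circ> x"

definition ranT :: "nat \<Rightarrow> (nat \<Rightarrow> nat) \<Rightarrow> nat set" where
  "ranT n x = x ` {1..n}"

definition rankT :: "nat \<Rightarrow> (nat \<Rightarrow> nat) \<Rightarrow> nat" where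
  "rankT n x = card (ranT n x)"

definition kerblocks :: "nat \<Rightarrow> (nat \<Rightarrow> nat) \<Rightarrow> nat set set" where
  "kerblocks n x = {{i \<in> {1..n}. x i = x j} | j. j \<in> {1..n}}"

text \<open>Green's relations in the semigroup (T_n, *_a), using S^1.\<close>
definition greenL :: "nat \<Rightarrow> (nat \<Rightarrow> nat) \<Rightarrow> (nat \<Rightarrow> nat) \<Rightarrow> (nat \<Rightarrow> nat) \<Rightarrow> bool" where
  "greenL n a x y \<longleftrightarrow>
     insert x {sandwich a s x | s. s \<in> Tn n} = insert y {sandwich a s y | s. s \<in> Tn n}"

definition greenR :: "nat \<Rightarrow> (nat \<Rightarrow> nat) \<Rightarrow> (nat \<Rightarrow> nat) \<Rightarrow> (nat \<Rightarrow> nat) \<Rightarrow> bool" where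
  "greenR n a x y \<longleftrightarrow>
     insert x {sandwich a x s | s. s \<in> Tn n} = insert y {sandwich a y s | s. s \<in> Tn n}"

definition Hclass :: "nat \<Rightarrow> (nat \<Rightarrow> nat) \<Rightarrow> (nat \<Rightarrow> nat) \<Rightarrow> (nat \<Rightarrow> nat) set" where
  "Hclass n a x = {y \<in> Tn n. greenL n a x y \<and> greenR n a x y}"

end

theory Submission
  imports Defs
begin

lemma TnD1: "f \<in> Tn n \<Longrightarrow> i \<in> {1..n} \<Longrightarrow> f i \<in> {1..n}"
  by (auto simp: Tn_def)

lemma TnD2: "f \<in> Tn n \<Longrightarrow> i \<notin> {1..n} \<Longrightarrow> f i = 0"
  by (auto simp: Tn_def)

lemma Tn_comp: "f \<in> Tn n \<Longrightarrow> g \<in> Tn n \<Longrightarrow> f \<circ> g \<in> Tn n"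
  unfolding Tn_def by auto

lemma greenL_iff:
  assumes "a \<in> Tn n" "x \<in> Tn n" "y \<in> Tn n"
  shows "greenL n a x y \<longleftrightarrow> x = y \<or> ((\<exists>s\<in>Tn n. x = sandwich a s y) \<and> (\<exists>t\<in>Tn n. y = sandwich a t x))"
proof
  assume h: "greenL n a x y"
  show "x = y \<or> ((\<exists>s\<in>Tn n. x = sandwich a s y) \<and> (\<exists>t\<in>Tn n. y = sandwich a t x))"
  proof (cases "x = y")
    case False
    have "x \<in> insert y {sandwich a s y | s. s \<in> Tn n}" using h unfolding greenL_def by blast
    then have 1: "\<exists>s\<in>Tn n. x = sandwich a s y" using False by auto
    have "y \<in> insert x {sandwich a s x | s. s \<in> Tn n}" using h unfolding greenL_def by blast
    then have 2: "\<exists>s\<in>Tn n. y = sandwich a s x" using False by auto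
    show ?thesis using 1 2 by blast
  qed simp
next
  assume h: "x = y \<or> ((\<exists>s\<in>Tn n. x = sandwich a s y) \<and> (\<exists>t\<in>Tn n. y = sandwich a t x))"
  show "greenL n a x y"
  proof (cases "x = y")
    case False
    then obtain s t where st: "s \<in> Tn n" "t \<in> Tn n" "x = sandwich a s y" "y = sandwich a t x" using h by blast
    have c1: "sandwich a u x = sandwich a (s \<circ> a \<circ> u) y" for u using st(3) by (simp add: sandwich_def comp_assoc)
    have c2: "sandwich a u y = sandwich a (t \<circ> a \<circ> u) x" for u using st(4) by (simp add: sandwich_def comp_assoc)
    have m1: "s \<circ> a \<circ> u \<in> Tn n" if "u \<in> Tn n" for u using st that assms by (simp add: Tn_comp)
    have m2: "t \<circ> a \<circ> u \<in> Tn n" if "u \<in> Tn n" for u using st that assms by (simp add: Tn_comp)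
    show ?thesis unfolding greenL_def
    proof (rule equalityI)
      show "insert x {sandwich a s x | s. s \<in> Tn n} \<subseteq> insert y {sandwich a s y | s. s \<in> Tn n}"
        using st c1 m1 by blast
      show "insert y {sandwich a s y | s. s \<in> Tn n} \<subseteq> insert x {sandwich a s x | s. s \<in> Tn n}"
        using st c2 m2 by blast
    qed
  qed (simp add: greenL_def)
qed

lemma greenR_iff:
  assumes "a \<in> Tn n" "x \<in> Tn n" "y \<in> Tn n"
  shows "greenR n a x y \<longleftrightarrow> x = y \<or> ((\<exists>s\<in>Tn n. x = sandwich a y s) \<and> (\<exists>t\<in>Tn n. y = sandwich a x t))"
proof
  assume h: "greenR n a x y"
  show "x = y \<or> ((\<exists>s\<in>Tn n. x = sandwich a y s) \<and> (\<exists>t\<in>Tn n. y = sandwich a x t))"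
  proof (cases "x = y")
    case False
    have "x \<in> insert y {sandwich a y s | s. s \<in> Tn n}" using h unfolding greenR_def by blast
    then have 1: "\<exists>s\<in>Tn n. x = sandwich a y s" using False by auto
    have "y \<in> insert x {sandwich a x s | s. s \<in> Tn n}" using h unfolding greenR_def by blast
    then have 2: "\<exists>s\<in>Tn n. y = sandwich a x s" using False by auto
    show ?thesis using 1 2 by blast
  qed simp
next
  assume h: "x = y \<or> ((\<exists>s\<in>Tn n. x = sandwich a y s) \<and> (\<exists>t\<in>Tn n. y = sandwich a x t))"
  show "greenR n a x y"
  proof (cases "x = y")
    case False
    then obtain s t where st: "s \<in> Tn n" "t \<in> Tn n" "x = sandwich a y s" "y = sandwich a x t" using h by blast
    have c1: "sandwich a x u = sandwich a y (u \<circ> a \<circ> s)" for u using st(3) by (simp add: sandwich_def comp_assoc)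
    have c2: "sandwich a y u = sandwich a x (u \<circ> a \<circ> t)" for u using st(4) by (simp add: sandwich_def comp_assoc)
    have m1: "u \<circ> a \<circ> s \<in> Tn n" if "u \<in> Tn n" for u using st that assms by (simp add: Tn_comp)
    have m2: "u \<circ> a \<circ> t \<in> Tn n" if "u \<in> Tn n" for u using st that assms by (simp add: Tn_comp)
    show ?thesis unfolding greenR_def
    proof (rule equalityI)
      show "insert x {sandwich a x s | s. s \<in> Tn n} \<subseteq> insert y {sandwich a y s | s. s \<in> Tn n}"
        using st c1 m1 by blast
      show "insert y {sandwich a y s | s. s \<in> Tn n} \<subseteq> insert x {sandwich a x s | s. s \<in> Tn n}"
        using st c2 m2 by blast
    qed
  qed (simp add: greenR_def)
qed

lemma CL_iff:
  assumes "a \<in> Tn n" "x \<in> Tn n" "y \<in> Tn n"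
  shows "(\<exists>s\<in>Tn n. x = sandwich a s y) \<longleftrightarrow> ranT n x \<subseteq> y ` ranT n a"
proof
  assume "\<exists>s\<in>Tn n. x = sandwich a s y"
  then obtain s where s: "s \<in> Tn n" "x = y \<circ> a \<circ> s" by (auto simp: sandwich_def)
  show "ranT n x \<subseteq> y ` ranT n a"
    using s TnD1[OF s(1)] by (auto simp: ranT_def)
next
  assume h: "ranT n x \<subseteq> y ` ranT n a"
  define s where "s i = (if i \<in> {1..n} then SOME j. j \<in> {1..n} \<and> x i = y (a j) else 0)" for i
  have ex: "\<exists>j. j \<in> {1..n} \<and> x i = y (a j)" if "i \<in> {1..n}" for i
  proof -
    have "x i \<in> y ` a ` {1..n}" using h that by (auto simp: ranT_def)
    then show ?thesis by auto
  qed
  have sp: "s i \<in> {1..n} \<and> x i = y (a (s i))" if "i \<in> {1..n}" for i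
    using someI_ex[OF ex[OF that]] that by (simp add: s_def)
  have "s \<in> Tn n" unfolding Tn_def
  proof (intro CollectI conjI ballI allI impI)
    fix i assume "i \<in> {1..n}" then show "s i \<in> {1..n}" using sp by blast
  next
    fix i assume "i \<notin> {1..n}" then show "s i = 0" unfolding s_def by (rule if_not_P)
  qed
  moreover have "x = sandwich a s y"
  proof
    fix i show "x i = sandwich a s y i"
    proof (cases "i \<in> {1..n}")
      case True then show ?thesis using sp by (simp add: sandwich_def)
    next
      case False
      then have "s i = 0" unfolding s_def by (rule if_not_P)
      moreover have "(0::nat) \<notin> {1..n}" by simp
      ultimately show ?thesis using False TnD2[OF assms(1)] TnD2[OF assms(2)] TnD2[OF assms(3)]
        by (simp add: sandwich_def)
    qed
  qed
  ultimately show "\<exists>s\<in>Tn n. x = sandwich a s y" by blast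
qed

lemma CR_iff:
  assumes "n \<ge> 1" "a \<in> Tn n" "x \<in> Tn n" "y \<in> Tn n"
  shows "(\<exists>s\<in>Tn n. x = sandwich a y s) \<longleftrightarrow> (\<forall>i\<in>{1..n}. \<forall>j\<in>{1..n}. a (y i) = a (y j) \<longrightarrow> x i = x j)"
proof
  assume "\<exists>s\<in>Tn n. x = sandwich a y s"
  then obtain s where s: "x = s \<circ> a \<circ> y" by (auto simp: sandwich_def)
  then show "\<forall>i\<in>{1..n}. \<forall>j\<in>{1..n}. a (y i) = a (y j) \<longrightarrow> x i = x j" by simp
next
  assume h: "\<forall>i\<in>{1..n}. \<forall>j\<in>{1..n}. a (y i) = a (y j) \<longrightarrow> x i = x j"
  define s where "s k = (if k \<in> (a \<circ> y) ` {1..n} then x (SOME i. i \<in> {1..n} \<and> a (y i) = k)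
      else if k \<in> {1..n} then 1 else 0)" for k
  have sp: "s (a (y i)) = x i" if i: "i \<in> {1..n}" for i
  proof -
    define i' where "i' = (SOME i'. i' \<in> {1..n} \<and> a (y i') = a (y i))"
    have ex: "\<exists>i'. i' \<in> {1..n} \<and> a (y i') = a (y i)" using i by blast
    have p: "i' \<in> {1..n} \<and> a (y i') = a (y i)" unfolding i'_def by (rule someI_ex[OF ex])
    then have xe: "x i' = x i" using h i by blast
    have mem: "a (y i) \<in> (a \<circ> y) ` {1..n}" using i by simp
    have "s (a (y i)) = x i'" unfolding s_def i'_def using mem by (rule if_P)
    then show ?thesis using xe by simp
  qed
  have img: "(a \<circ> y) ` {1..n} \<subseteq> {1..n}" using TnD1[OF assms(2)] TnD1[OF assms(4)] by auto
  have "s \<in> Tn n"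
    unfolding Tn_def
  proof (intro CollectI conjI ballI allI impI)
    fix k assume k: "k \<in> {1..n}"
    show "s k \<in> {1..n}"
    proof (cases "k \<in> (a \<circ> y) ` {1..n}")
      case True
      then obtain i where i: "i \<in> {1..n}" "k = a (y i)" by auto
      then show ?thesis using sp TnD1[OF assms(3) i(1)] by simp
    next
      case False then show ?thesis using k assms(1) by (simp add: s_def)
    qed
  next
    fix k assume k: "k \<notin> {1..n}"
    then have "k \<notin> (a \<circ> y) ` {1..n}" using img by blast
    then show "s k = 0" using k by (simp add: s_def)
  qed
  moreover have "x = sandwich a y s"
  proof
    fix i show "x i = sandwich a y s i"
    proof (cases "i \<in> {1..n}")
      case True then show ?thesis using sp by (simp add: sandwich_def)
    next
      case False
      have "(0::nat) \<notin> (a \<circ> y) ` {1..n}" using img by auto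
      then have "s 0 = 0" by (simp add: s_def)
      then show ?thesis using False TnD2[OF assms(2)] TnD2[OF assms(3)] TnD2[OF assms(4)]
        by (simp add: sandwich_def)
    qed
  qed
  ultimately show "\<exists>s\<in>Tn n. x = sandwich a y s" by blast
qed

lemma kerblocks_eq:
  "kerblocks n y = kerblocks n x \<longleftrightarrow> (\<forall>i\<in>{1..n}. \<forall>j\<in>{1..n}. x i = x j \<longleftrightarrow> y i = y j)"
proof
  assume h: "kerblocks n y = kerblocks n x"
  show "\<forall>i\<in>{1..n}. \<forall>j\<in>{1..n}. x i = x j \<longleftrightarrow> y i = y j"
  proof (intro ballI)
    fix i j assume i: "i \<in> {1..n}" and j: "j \<in> {1..n}"
    have "{k \<in> {1..n}. y k = y i} \<in> kerblocks n x" using h i unfolding kerblocks_def by blast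
    then obtain m where m: "m \<in> {1..n}" "{k \<in> {1..n}. y k = y i} = {k \<in> {1..n}. x k = x m}"
      unfolding kerblocks_def by blast
    have "x i = x m" using m i by blast
    then have e: "{k \<in> {1..n}. y k = y i} = {k \<in> {1..n}. x k = x i}" using m by simp
    have "j \<in> {k \<in> {1..n}. y k = y i} \<longleftrightarrow> j \<in> {k \<in> {1..n}. x k = x i}" using e by simp
    then show "x i = x j \<longleftrightarrow> y i = y j" using j by auto
  qed
next
  assume h: "\<forall>i\<in>{1..n}. \<forall>j\<in>{1..n}. x i = x j \<longleftrightarrow> y i = y j"
  have "{k \<in> {1..n}. y k = y j} = {k \<in> {1..n}. x k = x j}" if "j \<in> {1..n}" for j
    using h that by auto
  then show "kerblocks n y = kerblocks n x" unfolding kerblocks_def by blast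
qed

lemma card_cond:
  assumes "a \<in> Tn n" "z \<in> Tn n"
  shows "(\<forall>M \<in> kerblocks n a. card (ranT n z \<inter> M) \<le> 1) \<longleftrightarrow> inj_on a (ranT n z)"
proof
  assume h: "\<forall>M \<in> kerblocks n a. card (ranT n z \<inter> M) \<le> 1"
  show "inj_on a (ranT n z)"
  proof (rule inj_onI)
    fix u v assume u: "u \<in> ranT n z" and v: "v \<in> ranT n z" and e: "a u = a v"
    have un: "u \<in> {1..n}" "v \<in> {1..n}" using u v TnD1[OF assms(2)] by (auto simp: ranT_def)
    let ?M = "{i \<in> {1..n}. a i = a u}"
    have "?M \<in> kerblocks n a" using un(1) unfolding kerblocks_def by (intro CollectI exI[of _ u]) simp
    then have c: "card (ranT n z \<inter> ?M) \<le> 1" using h by blast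
    have mem: "u \<in> ranT n z \<inter> ?M" "v \<in> ranT n z \<inter> ?M" using u v un e by auto
    have fin: "finite (ranT n z \<inter> ?M)" by (simp add: ranT_def)
    have c': "card (ranT n z \<inter> ?M) \<le> Suc 0" using c by (simp only: One_nat_def)
    have "\<forall>a1\<in>ranT n z \<inter> ?M. \<forall>a2\<in>ranT n z \<inter> ?M. a1 = a2"
      using iffD1[OF card_le_Suc0_iff_eq[OF fin] c'] .
    then show "u = v" using mem by blast
  qed
next
  assume h: "inj_on a (ranT n z)"
  show "\<forall>M \<in> kerblocks n a. card (ranT n z \<inter> M) \<le> 1"
  proof
    fix M assume "M \<in> kerblocks n a"
    then obtain j where M: "M = {i \<in> {1..n}. a i = a j}" unfolding kerblocks_def by auto
    have "\<forall>u \<in> ranT n z \<inter> M. \<forall>v \<in> ranT n z \<inter> M. u = v"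
    proof (intro ballI)
      fix u v assume u: "u \<in> ranT n z \<inter> M" and v: "v \<in> ranT n z \<inter> M"
      then have "a u = a v" using M by simp
      then show "u = v" using inj_onD[OF h] u v by blast
    qed
    moreover have fin: "finite (ranT n z \<inter> M)" by (simp add: ranT_def)
    ultimately have "card (ranT n z \<inter> M) \<le> Suc 0" using iffD2[OF card_le_Suc0_iff_eq[OF fin]] by blast
    then show "card (ranT n z \<inter> M) \<le> 1" by (simp only: One_nat_def)
  qed
qed

lemma block_cond:
  assumes "a \<in> Tn n" "z \<in> Tn n"
  shows "(\<forall>B \<in> kerblocks n z. B \<inter> ranT n a \<noteq> {}) \<longleftrightarrow> ranT n z \<subseteq> z ` ranT n a"
proof
  assume h: "\<forall>B \<in> kerblocks n z. B \<inter> ranT n a \<noteq> {}"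
  show "ranT n z \<subseteq> z ` ranT n a"
  proof
    fix w assume "w \<in> ranT n z"
    then obtain i where i: "i \<in> {1..n}" "w = z i" by (auto simp: ranT_def)
    have "{k \<in> {1..n}. z k = z i} \<in> kerblocks n z" using i unfolding kerblocks_def by blast
    then obtain k where "k \<in> {k \<in> {1..n}. z k = z i} \<inter> ranT n a" using h by blast
    then have "k \<in> ranT n a" "z k = w" using i by auto
    then show "w \<in> z ` ranT n a" by (metis imageI)
  qed
next
  assume h: "ranT n z \<subseteq> z ` ranT n a"
  show "\<forall>B \<in> kerblocks n z. B \<inter> ranT n a \<noteq> {}"
  proof
    fix B assume "B \<in> kerblocks n z"
    then obtain j where B: "j \<in> {1..n}" "B = {i \<in> {1..n}. z i = z j}" unfolding kerblocks_def by blast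
    have "z j \<in> ranT n z" using B by (auto simp: ranT_def)
    then obtain k where k: "k \<in> ranT n a" "z k = z j" using h by auto
    have "k \<in> {1..n}" using k TnD1[OF assms(1)] by (auto simp: ranT_def)
    then show "B \<inter> ranT n a \<noteq> {}" using k B by blast
  qed
qed

lemma rank_le:
  assumes "ranT n z \<subseteq> z ` ranT n a"
  shows "rankT n z \<le> rankT n a"
proof -
  have "card (ranT n z) \<le> card (z ` ranT n a)" using assms by (intro card_mono) (auto simp: ranT_def)
  also have "\<dots> \<le> card (ranT n a)" by (intro card_image_le) (simp add: ranT_def)
  finally show ?thesis by (simp add: rankT_def)
qed

lemma H_unpack:
  assumes "Y \<and> (x = y \<or> (A \<and> B \<and> C \<and> D))" "x \<noteq> y"
  shows "A" "B" "C" "D"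
  using assms by blast+

theorem theorem6:
  fixes n :: nat and a x :: "nat \<Rightarrow> nat"
  assumes "n > 1" and "a \<in> Tn n" and "x \<in> Tn n"
  shows "Hclass n a x =
           (if rankT n x \<le> rankT n a \<and>
               (\<forall>M \<in> kerblocks n a. card (ranT n x \<inter> M) \<le> 1) \<and>
               (\<forall>B \<in> kerblocks n x. B \<inter> ranT n a \<noteq> {})
            then {y \<in> Tn n. kerblocks n y = kerblocks n x \<and> ranT n y = ranT n x \<and>
                (\<forall>M \<in> kerblocks n a. card (ranT n y \<inter> M) \<le> 1) \<and>
                (\<forall>B \<in> kerblocks n y. B \<inter> ranT n a \<noteq> {})}
            else {x})"
proof -
  have n1: "n \<ge> 1" using assms(1) by simp
  have H: "y \<in> Hclass n a x \<longleftrightarrow> y \<in> Tn n \<and> (x = y \<or>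
      (ranT n x \<subseteq> y ` ranT n a \<and> ranT n y \<subseteq> x ` ranT n a \<and>
       (\<forall>i\<in>{1..n}. \<forall>j\<in>{1..n}. a (x i) = a (x j) \<longrightarrow> y i = y j) \<and>
       (\<forall>i\<in>{1..n}. \<forall>j\<in>{1..n}. a (y i) = a (y j) \<longrightarrow> x i = x j)))" for y
  proof (cases "y \<in> Tn n")
    case True
    show ?thesis unfolding Hclass_def
      using greenL_iff[OF assms(2,3) True] greenR_iff[OF assms(2,3) True]
        CL_iff[OF assms(2,3) True] CL_iff[OF assms(2) True assms(3)]
        CR_iff[OF n1 assms(2,3) True] CR_iff[OF n1 assms(2) True assms(3)] True
      by auto
  qed (simp add: Hclass_def)
  have ranx: "ranT n x \<subseteq> {1..n}" using TnD1[OF assms(3)] by (auto simp: ranT_def)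
  show ?thesis
  proof (cases "rankT n x \<le> rankT n a \<and>
               (\<forall>M \<in> kerblocks n a. card (ranT n x \<inter> M) \<le> 1) \<and>
               (\<forall>B \<in> kerblocks n x. B \<inter> ranT n a \<noteq> {})")
    case cond: True
    then have ix: "inj_on a (ranT n x)" and cx: "ranT n x \<subseteq> x ` ranT n a"
      using card_cond[OF assms(2,3)] block_cond[OF assms(2,3)] by auto
    have "Hclass n a x = {y \<in> Tn n. kerblocks n y = kerblocks n x \<and> ranT n y = ranT n x \<and>
                (\<forall>M \<in> kerblocks n a. card (ranT n y \<inter> M) \<le> 1) \<and>
                (\<forall>B \<in> kerblocks n y. B \<inter> ranT n a \<noteq> {})}"
    proof (rule set_eqI)
      fix y
      show "y \<in> Hclass n a x \<longleftrightarrow> y \<in> {y \<in> Tn n. kerblocks n y = kerblocks n x \<and> ranT n y = ranT n x \<and>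
                (\<forall>M \<in> kerblocks n a. card (ranT n y \<inter> M) \<le> 1) \<and>
                (\<forall>B \<in> kerblocks n y. B \<inter> ranT n a \<noteq> {})}"
      proof (cases "y \<in> Tn n")
        case yT: True
        show ?thesis
        proof (cases "y = x")
          case True then show ?thesis using H yT cond by auto
        next
          case False
          have eq1: "kerblocks n y = kerblocks n x \<longleftrightarrow> (\<forall>i\<in>{1..n}. \<forall>j\<in>{1..n}. x i = x j \<longleftrightarrow> y i = y j)"
            by (rule kerblocks_eq)
          note cc = card_cond[OF assms(2) yT] block_cond[OF assms(2) yT]
          show ?thesis
          proof
            assume "y \<in> Hclass n a x"
            have neq: "x \<noteq> y" using False by (rule not_sym)
            note h = H_unpack[OF iffD1[OF H \<open>y \<in> Hclass n a x\<close>] neq]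
            have rr: "ranT n y \<subseteq> ranT n x" "ranT n x \<subseteq> ranT n y"
              using h(1,2) TnD1[OF assms(2)] by (auto simp: ranT_def)
            have ker: "\<forall>i\<in>{1..n}. \<forall>j\<in>{1..n}. x i = x j \<longleftrightarrow> y i = y j"
              using h(3,4) by metis
            have iy: "inj_on a (ranT n y)"
            proof (rule inj_onI)
              fix u v assume "u \<in> ranT n y" "v \<in> ranT n y" "a u = a v"
              then obtain i j where "i \<in> {1..n}" "j \<in> {1..n}" "u = y i" "v = y j" "a (y i) = a (y j)"
                by (auto simp: ranT_def)
              then show "u = v" using h(4) ker by metis
            qed
            have "ranT n y \<subseteq> y ` ranT n a" using rr h(1) by blast
            then show "y \<in> {y \<in> Tn n. kerblocks n y = kerblocks n x \<and> ranT n y = ranT n x \<and>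
                (\<forall>M \<in> kerblocks n a. card (ranT n y \<inter> M) \<le> 1) \<and>
                (\<forall>B \<in> kerblocks n y. B \<inter> ranT n a \<noteq> {})}"
              using yT eq1 ker rr iy cc by auto
          next
            assume "y \<in> {y \<in> Tn n. kerblocks n y = kerblocks n x \<and> ranT n y = ranT n x \<and>
                (\<forall>M \<in> kerblocks n a. card (ranT n y \<inter> M) \<le> 1) \<and>
                (\<forall>B \<in> kerblocks n y. B \<inter> ranT n a \<noteq> {})}"
            then have ker: "\<forall>i\<in>{1..n}. \<forall>j\<in>{1..n}. x i = x j \<longleftrightarrow> y i = y j"
              and ry: "ranT n y = ranT n x" and iy: "inj_on a (ranT n y)" and cy: "ranT n y \<subseteq> y ` ranT n a"
              using eq1 cc by auto
            have a1: "\<forall>i\<in>{1..n}. \<forall>j\<in>{1..n}. a (x i) = a (x j) \<longrightarrow> y i = y j"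
            proof (intro ballI impI)
              fix i j assume "i \<in> {1..n}" "j \<in> {1..n}" "a (x i) = a (x j)"
              then have "x i = x j" using ix by (auto simp: ranT_def dest: inj_onD)
              then show "y i = y j" using ker \<open>i \<in> _\<close> \<open>j \<in> _\<close> by blast
            qed
            have a2: "\<forall>i\<in>{1..n}. \<forall>j\<in>{1..n}. a (y i) = a (y j) \<longrightarrow> x i = x j"
            proof (intro ballI impI)
              fix i j assume "i \<in> {1..n}" "j \<in> {1..n}" "a (y i) = a (y j)"
              then have "y i = y j" using iy by (auto simp: ranT_def dest: inj_onD)
              then show "x i = x j" using ker \<open>i \<in> _\<close> \<open>j \<in> _\<close> by blast
            qed
            have r1: "ranT n x \<subseteq> y ` ranT n a" using ry cy by simp
            have r2: "ranT n y \<subseteq> x ` ranT n a" using ry cx by simp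
            show "y \<in> Hclass n a x" by (rule iffD2[OF H]) (use yT a1 a2 r1 r2 in blast)
          qed
        qed
      qed (simp add: H)
    qed
    then show ?thesis by (simp only: if_P[OF cond])
  next
    case False
    have "Hclass n a x = {x}"
    proof (rule set_eqI)
      fix y
      show "y \<in> Hclass n a x \<longleftrightarrow> y \<in> {x}"
      proof
        assume "y \<in> Hclass n a x"
        show "y \<in> {x}"
        proof (rule ccontr)
          assume "y \<notin> {x}"
          then have neq: "x \<noteq> y" by simp
          note h = H_unpack[OF iffD1[OF H \<open>y \<in> Hclass n a x\<close>] neq]
          have yT: "y \<in> Tn n" using iffD1[OF H \<open>y \<in> Hclass n a x\<close>] by (rule conjunct1)
          have rr: "ranT n y \<subseteq> ranT n x" "ranT n x \<subseteq> ranT n y"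
            using h(1,2) TnD1[OF assms(2)] by (auto simp: ranT_def)
          have cx: "ranT n x \<subseteq> x ` ranT n a" using rr h(2) by blast
          have ix: "inj_on a (ranT n x)"
          proof (rule inj_onI)
            fix u v assume "u \<in> ranT n x" "v \<in> ranT n x" "a u = a v"
            then obtain i j where "i \<in> {1..n}" "j \<in> {1..n}" "u = x i" "v = x j" "a (x i) = a (x j)"
              by (auto simp: ranT_def)
            then show "u = v" using h(3,4) by metis
          qed
          show False using False cx ix rank_le[OF cx] card_cond[OF assms(2,3)] block_cond[OF assms(2,3)]
            by auto
        qed
      next
        assume "y \<in> {x}" then show "y \<in> Hclass n a x" by (intro iffD2[OF H]) (use assms(3) in auto)
      qed
    qed
    then show ?thesis by (simp only: if_not_P[OF False])
  qed
qed

end
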